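(* Let $e_1=(1:0:0)$, $e_2=(0:1:0)$, $e_3=(0:0:1)$, $e_4=(1:1:1)$ and $\mathcal S_1=\{e_1\}$, $\mathcal S_2=\{e_1,e_2\}$, $\mathcal S_3=\{e_1,e_2,e_3\}$, $\mathcal S_4=\{e_1,e_2,e_3,e_4\}$. Then for $i=1,2,3,4$ one has $\operatorname{span}(F_{\mathcal S_i})=I_{\mathcal S_i}$.
   Context: $H_k\subseteq\mathbb R[x,y,z]$: real ternary forms of degree $k$; $P_{3,4}=\{f\in H_4: f\ge0\text{ on }\mathbb P^2(\mathbb R)\}$. For $s\in\mathbb P^2(\mathbb R)$: $F_s=\{f\in P_{3,4}: f(s)=0\}$ and $I_s=\{f\in H_4: \operatorname{ord}_s(f)\ge2\}$, where $\operatorname{ord}_s(f)$ is the order of vanishing of $f$ at $s$ (least degree of a nonzero homogeneous component of $f$ in affine coordinates centered at $s$). For a finite set $\mathcal S=\{s_1,\dots,s_n\}$ of distinct real points, $F_{\mathcal S}=\bigcap_iF_{s_i}$ and $I_{\mathcal S}=\bigcap_iI_{s_i}$. *)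

theory Defs
  imports "HOL-Analysis.Analysis" "HOL-Library.Function_Algebras"
begin

text \<open>A real ternary form of degree 4 is represented by its coefficient function
  on exponent triples (a,b,c); the coefficient of x^a y^b z^c.\<close>

type_synonym form = "nat \<times> nat \<times> nat \<Rightarrow> real"

definition monos4 :: "(nat \<times> nat \<times> nat) set" where
  "monos4 = {(a,b,c). a + b + c = 4}"

definition H4 :: "form set" where
  "H4 = {f. \<forall>m. m \<notin> monos4 \<longrightarrow> f m = 0}"

definition evalf :: "form \<Rightarrow> real \<times> real \<times> real \<Rightarrow> real" where
  "evalf f = (\<lambda>(x,y,z). \<Sum>(a,b,c)\<in>monos4. f (a,b,c) * x ^ a * y ^ b * z ^ c)"

definition fscale :: "real \<Rightarrow> form \<Rightarrow> form" where
  "fscale c f = (\<lambda>m. c * f m)"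

abbreviation fspan :: "form set \<Rightarrow> form set" where
  "fspan \<equiv> module.span fscale"

lemma module_fscale: "module fscale"
  by unfold_locales (auto simp: fscale_def fun_eq_iff algebra_simps)

text \<open>Nonnegative quartics (nonnegativity on P^2(R) = on R^3, by homogeneity of even degree).\<close>
definition P34 :: "form set" where
  "P34 = {f \<in> H4. \<forall>v. evalf f v \<ge> 0}"

text \<open>Points of P^2(R) are given by nonzero representatives in R^3.\<close>
definition Fpt :: "real \<times> real \<times> real \<Rightarrow> form set" where
  "Fpt s = {f \<in> P34. evalf f s = 0}"

definition ord_ge2 :: "form \<Rightarrow> real \<times> real \<times> real \<Rightarrow> bool" where
  "ord_ge2 f s \<longleftrightarrow> evalf f s = 0 \<and> (evalf f has_derivative (\<lambda>_. 0)) (at s)"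

definition Ipt :: "real \<times> real \<times> real \<Rightarrow> form set" where
  "Ipt s = {f \<in> H4. ord_ge2 f s}"

definition FS :: "(real \<times> real \<times> real) set \<Rightarrow> form set" where
  "FS S = {f \<in> P34. \<forall>s\<in>S. f \<in> Fpt s}"

definition IS :: "(real \<times> real \<times> real) set \<Rightarrow> form set" where
  "IS S = {f \<in> H4. \<forall>s\<in>S. f \<in> Ipt s}"

end

theory Submission
  imports Defs
begin

definition mon :: "nat\<times>nat\<times>nat \<Rightarrow> real\<times>real\<times>real \<Rightarrow> real" where
 "mon m v = fst v ^ fst m * fst (snd v) ^ fst (snd m) * snd (snd v) ^ snd (snd m)"
definition dmon :: "nat\<times>nat\<times>nat \<Rightarrow> real\<times>real\<times>real \<Rightarrow> real\<times>real\<times>real \<Rightarrow> real" where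
 "dmon m v h = real (fst m) * fst v ^ (fst m - 1) * fst h * fst (snd v) ^ fst (snd m) * snd (snd v) ^ snd (snd m)
   + real (fst (snd m)) * fst v ^ fst m * fst (snd v) ^ (fst (snd m) - 1) * fst (snd h) * snd (snd v) ^ snd (snd m)
   + real (snd (snd m)) * fst v ^ fst m * fst (snd v) ^ fst (snd m) * snd (snd v) ^ (snd (snd m) - 1) * snd (snd h)"
lemma mon_deriv: "(mon m has_derivative dmon m v) (at v)"
  unfolding mon_def[abs_def] dmon_def[abs_def]
  apply (rule has_derivative_eq_rhs)
   apply (rule derivative_eq_intros | simp)+
  apply (auto simp: fun_eq_iff algebra_simps)
  done
lemma monos4_eq: "monos4 = {(4,0,0),(3,1,0),(3,0,1),(2,2,0),(2,1,1),(2,0,2),(1,3,0),(1,2,1),(1,1,2),(1,0,3),(0,4,0),(0,3,1),(0,2,2),(0,1,3),(0,0,4)}"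
proof -
  have "a+b+c = (4::nat) \<Longrightarrow> (a,b,c) \<in> {(4,0,0),(3,1,0),(3,0,1),(2,2,0),(2,1,1),(2,0,2),(1,3,0),(1,2,1),(1,1,2),(1,0,3),(0,4,0),(0,3,1),(0,2,2),(0,1,3),(0,0,4)}" for a b c
  proof -
    assume h: "a+b+c = 4"
    have A: "a = 0 \<or> a = 1 \<or> a = 2 \<or> a = 3 \<or> a = 4" and B: "b = 0 \<or> b = 1 \<or> b = 2 \<or> b = 3 \<or> b = 4"
      and C: "c = 4 - a - b" using h by arith+
    show ?thesis using A B C h by (elim disjE; simp)
  qed
  note F = this
  show ?thesis unfolding monos4_def
  proof (rule set_eqI)
    fix m :: "nat\<times>nat\<times>nat"
    obtain a b c where m: "m = (a,b,c)" by (cases m) auto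
    show "m \<in> {(a,b,c). a+b+c = 4} \<longleftrightarrow> m \<in> {(4,0,0),(3,1,0),(3,0,1),(2,2,0),(2,1,1),(2,0,2),(1,3,0),(1,2,1),(1,1,2),(1,0,3),(0,4,0),(0,3,1),(0,2,2),(0,1,3),(0,0,4)}"
    proof
      assume "m \<in> {(a,b,c). a+b+c = 4}" thus "m \<in> {(4,0,0),(3,1,0),(3,0,1),(2,2,0),(2,1,1),(2,0,2),(1,3,0),(1,2,1),(1,1,2),(1,0,3),(0,4,0),(0,3,1),(0,2,2),(0,1,3),(0,0,4)}"
        using F[of a b c] m by simp
    next
      assume "m \<in> {(4,0,0),(3,1,0),(3,0,1),(2,2,0),(2,1,1),(2,0,2),(1,3,0),(1,2,1),(1,1,2),(1,0,3),(0,4,0),(0,3,1),(0,2,2),(0,1,3),(0,0,4)}"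
      thus "m \<in> {(a,b,c). a+b+c = 4}" by (elim insertE) auto
    qed
  qed
qed


lemma evalf_alt: "evalf f v = (\<Sum>m\<in>monos4. f m * mon m v)"
  by (cases v) (auto simp: evalf_def mon_def intro!: sum.cong)

lemma finite_monos4: "finite monos4" by (simp add: monos4_eq)

lemma evalf_deriv: "(evalf f has_derivative (\<lambda>h. \<Sum>m\<in>monos4. f m * dmon m v h)) (at v)"
proof -
  have "((\<lambda>v. \<Sum>m\<in>monos4. f m * mon m v) has_derivative (\<lambda>h. \<Sum>m\<in>monos4. f m * dmon m v h)) (at v)"
    by (intro has_derivative_sum has_derivative_mult_right mon_deriv)
  thus ?thesis by (simp add: evalf_alt[abs_def])
qed

lemma ord_eq: assumes "ord_ge2 f s" shows "(\<Sum>m\<in>monos4. f m * dmon m s h) = 0" "evalf f s = 0"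
proof -
  have "(\<lambda>h. \<Sum>m\<in>monos4. f m * dmon m s h) = (\<lambda>_. 0)"
    using has_derivative_unique[OF evalf_deriv] assms unfolding ord_ge2_def by blast
  thus "(\<Sum>m\<in>monos4. f m * dmon m s h) = 0" by metis
  show "evalf f s = 0" using assms ord_ge2_def by blast
qed

definition delta :: "nat\<times>nat\<times>nat \<Rightarrow> form" where "delta m = (\<lambda>k. if k = m then 1 else 0)"

lemma evalf_add: "evalf (f + g) v = evalf f v + evalf g v"
  by (simp add: evalf_alt sum.distrib algebra_simps)
lemma evalf_diff: "evalf (f - g) v = evalf f v - evalf g v"
  by (simp add: evalf_alt sum_subtractf algebra_simps)
lemma evalf_scale: "evalf (fscale c f) v = c * evalf f v"
  by (simp add: evalf_alt fscale_def sum_distrib_left algebra_simps)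
lemma evalf_delta: assumes "m \<in> monos4" shows "evalf (delta m) v = mon m v"
proof -
  have "evalf (delta m) v = (\<Sum>k\<in>monos4. if k = m then mon k v else 0)"
    unfolding evalf_alt by (rule sum.cong) (auto simp: delta_def)
  also have "\<dots> = mon m v" using assms finite_monos4 by (simp add: sum.delta)
  finally show ?thesis .
qed

lemma H4_add: "f \<in> H4 \<Longrightarrow> g \<in> H4 \<Longrightarrow> f + g \<in> H4" by (simp add: H4_def)
lemma H4_diff: "f \<in> H4 \<Longrightarrow> g \<in> H4 \<Longrightarrow> f - g \<in> H4" by (simp add: H4_def)
lemma H4_scale: "f \<in> H4 \<Longrightarrow> fscale c f \<in> H4" by (simp add: H4_def fscale_def)
lemma H4_delta: "m \<in> monos4 \<Longrightarrow> delta m \<in> H4" by (auto simp add: H4_def delta_def)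

lemma FS_intro: "g \<in> H4 \<Longrightarrow> (\<And>v. evalf g v \<ge> 0) \<Longrightarrow> (\<And>s. s\<in>S \<Longrightarrow> evalf g s = 0) \<Longrightarrow> g \<in> FS S"
  by (simp add: FS_def Fpt_def P34_def)

definition tadd :: "nat\<times>nat\<times>nat \<Rightarrow> nat\<times>nat\<times>nat \<Rightarrow> nat\<times>nat\<times>nat" where
  "tadd u w = (fst u + fst w, fst (snd u) + fst (snd w), snd (snd u) + snd (snd w))"
definition monos2 :: "(nat\<times>nat\<times>nat) set" where "monos2 = {(a,b,c). a+b+c = 2}"

lemma tadd_monos4: "u \<in> monos2 \<Longrightarrow> w \<in> monos2 \<Longrightarrow> tadd u w \<in> monos4"
  by (auto simp: monos2_def monos4_def tadd_def)
lemma mon_tadd: "mon (tadd u w) v = mon u v * mon w v"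
  by (simp add: mon_def tadd_def power_add)

definition sq :: "nat\<times>nat\<times>nat \<Rightarrow> nat\<times>nat\<times>nat \<Rightarrow> form" where
  "sq u w = delta (tadd u u) + fscale 2 (delta (tadd u w)) + delta (tadd w w)"

lemma sq_FS: assumes "u \<in> monos2" "w \<in> monos2" "\<forall>s\<in>S. mon u s = 0 \<and> mon w s = 0"
  shows "sq u w \<in> FS S"
proof -
  have ev: "evalf (sq u w) v = (mon u v + mon w v)^2" for v
    using assms by (simp add: sq_def evalf_add evalf_scale evalf_delta tadd_monos4 mon_tadd power2_eq_square algebra_simps)
  have "sq u w \<in> H4" unfolding sq_def using assms by (simp add: H4_add H4_scale H4_delta tadd_monos4)
  moreover have "evalf (sq u w) s = 0" if "s \<in> S" for s using assms that by (simp add: ev)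
  ultimately show ?thesis
    by (intro FS_intro) (auto simp: ev)
qed

lemma delta_span: assumes "u \<in> monos2" "w \<in> monos2" "\<forall>s\<in>S. mon u s = 0 \<and> mon w s = 0"
  shows "delta (tadd u w) \<in> fspan (FS S)"
proof -
  interpret M: module fscale by (rule module_fscale)
  have e: "delta (tadd u w) = fscale (1/2) (sq u w - fscale (1/4) (sq u u) - fscale (1/4) (sq w w))"
    by (auto simp: fun_eq_iff fscale_def sq_def delta_def)
  show ?thesis unfolding e
    by (intro M.span_scale M.span_diff M.span_base sq_FS) (use assms in auto)
qed

lemma sum_fun_apply: "(\<Sum>m\<in>A. g m) k = (\<Sum>m\<in>A. g m k)"
  by (induction A rule: infinite_finite_induct) auto

lemma span_of_coeffs: assumes "f \<in> H4" "\<forall>m\<in>monos4. f m = 0 \<or> delta m \<in> fspan T"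
  shows "f \<in> fspan T"
proof -
  interpret M: module fscale by (rule module_fscale)
  have e: "f = (\<Sum>m\<in>monos4. fscale (f m) (delta m))"
  proof
    fix k
    have "k \<notin> monos4 \<Longrightarrow> f k = 0" using assms(1) unfolding H4_def by blast
    then show "f k = (\<Sum>m\<in>monos4. fscale (f m) (delta m)) k"
      by (auto simp: sum_fun_apply fscale_def delta_def H4_def finite_monos4 if_distrib cong: if_cong)
  qed
  show ?thesis
  proof (subst e, rule M.span_sum)
    fix m assume "m \<in> monos4"
    then consider "f m = 0" | "delta m \<in> fspan T" using assms(2) by blast
    thus "fscale (f m) (delta m) \<in> fspan T"
    proof cases
      case 1
      have "fscale (f m) (delta m) = 0" using 1 by (simp add: fscale_def fun_eq_iff)
      thus ?thesis using M.span_zero by simp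
    qed (rule M.span_scale)
  qed
qed

lemma IS_subspace: "module.subspace fscale (IS S)"
proof -
  interpret M: module fscale by (rule module_fscale)
  have z: "(0::form) \<in> IS S"
  proof -
    have "evalf 0 = (\<lambda>_. 0)" by (simp add: evalf_alt[abs_def])
    thus ?thesis by (simp add: IS_def Ipt_def ord_ge2_def H4_def)
  qed
  have a: "f + g \<in> IS S" if "f \<in> IS S" "g \<in> IS S" for f g
  proof -
    have "evalf (f+g) = (\<lambda>v. evalf f v + evalf g v)" by (simp add: evalf_add fun_eq_iff)
    moreover have "ord_ge2 f s \<Longrightarrow> ord_ge2 g s \<Longrightarrow> ((\<lambda>v. evalf f v + evalf g v) has_derivative (\<lambda>_. 0)) (at s)" for s
      unfolding ord_ge2_def using has_derivative_add[of "evalf f" "\<lambda>_. 0" _ "evalf g" "\<lambda>_. 0"] by simp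
    ultimately show ?thesis using that by (auto simp: IS_def Ipt_def ord_ge2_def H4_add evalf_add)
  qed
  have s: "fscale c f \<in> IS S" if "f \<in> IS S" for f c
  proof -
    have "evalf (fscale c f) = (\<lambda>v. c * evalf f v)" by (simp add: evalf_scale fun_eq_iff)
    moreover have "ord_ge2 f s \<Longrightarrow> ((\<lambda>v. c * evalf f v) has_derivative (\<lambda>_. 0)) (at s)" for s
      unfolding ord_ge2_def using has_derivative_mult_right[of "evalf f" "\<lambda>_. 0" _ c] by simp
    ultimately show ?thesis using that by (auto simp: IS_def Ipt_def ord_ge2_def H4_scale evalf_scale)
  qed
  show ?thesis unfolding M.subspace_def using z a s by blast
qed

lemma FS_sub_IS: "FS S \<subseteq> IS S"
proof
  fix f assume f: "f \<in> FS S"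
  have H: "f \<in> H4" using f by (simp add: FS_def P34_def)
  have "ord_ge2 f s" if s: "s \<in> S" for s
  proof -
    have z: "evalf f s = 0" using f s by (simp add: FS_def Fpt_def)
    have nn: "\<forall>y\<in>UNIV. evalf f s \<le> evalf f y" using f z by (simp add: FS_def P34_def)
    have "(\<lambda>h. \<Sum>m\<in>monos4. f m * dmon m s h) = (\<lambda>_. 0)"
      by (rule differential_zero_maxmin[of s UNIV, OF _ _ evalf_deriv]) (use nn in auto)
    thus "ord_ge2 f s" using evalf_deriv[of f s] z unfolding ord_ge2_def by simp
  qed
  thus "f \<in> IS S" using H unfolding IS_def Ipt_def by auto
qed

lemma span_sub: "fspan (FS S) \<subseteq> IS S"
proof -
  interpret M: module fscale by (rule module_fscale)
  show ?thesis by (rule M.span_minimal[OF FS_sub_IS IS_subspace])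
qed



lemma delta_span2: "u \<in> monos2 \<Longrightarrow> w \<in> monos2 \<Longrightarrow> \<forall>s\<in>S. mon u s = 0 \<and> mon w s = 0 \<Longrightarrow> tadd u w = m \<Longrightarrow> delta m \<in> fspan (FS S)"
  using delta_span by blast

lemma span_of_coeffs15: "f \<in> H4 \<Longrightarrow> (f (4,0,0) = 0 \<or> delta (4,0,0) \<in> fspan T) \<Longrightarrow> (f (3,1,0) = 0 \<or> delta (3,1,0) \<in> fspan T) \<Longrightarrow> (f (3,0,1) = 0 \<or> delta (3,0,1) \<in> fspan T) \<Longrightarrow> (f (2,2,0) = 0 \<or> delta (2,2,0) \<in> fspan T) \<Longrightarrow> (f (2,1,1) = 0 \<or> delta (2,1,1) \<in> fspan T) \<Longrightarrow> (f (2,0,2) = 0 \<or> delta (2,0,2) \<in> fspan T) \<Longrightarrow> (f (1,3,0) = 0 \<or> delta (1,3,0) \<in> fspan T) \<Longrightarrow> (f (1,2,1) = 0 \<or> delta (1,2,1) \<in> fspan T) \<Longrightarrow> (f (1,1,2) = 0 \<or> delta (1,1,2) \<in> fspan T) \<Longrightarrow> (f (1,0,3) = 0 \<or> delta (1,0,3) \<in> fspan T) \<Longrightarrow> (f (0,4,0) = 0 \<or> delta (0,4,0) \<in> fspan T) \<Longrightarrow> (f (0,3,1) = 0 \<or> delta (0,3,1) \<in> fspan T) \<Longrightarrow> (f (0,2,2) = 0 \<or> delta (0,2,2) \<in> fspan T) \<Longrightarrow> (f (0,1,3) = 0 \<or> delta (0,1,3) \<in> fspan T) \<Longrightarrow>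 (f (0,0,4) = 0 \<or> delta (0,0,4) \<in> fspan T) \<Longrightarrow> f \<in> fspan T"
  apply (rule span_of_coeffs, assumption)
  apply (unfold monos4_eq)
  apply (rule ballI)
  apply (elim insertE emptyE; hypsubst; assumption)
  done

lemma S1: "IS {(1,0,0)} \<subseteq> fspan (FS {(1,0,0)})"
proof
  fix f assume f: "f \<in> IS {(1,0,0)}"
  have H: "f \<in> H4" using f by (simp add: IS_def)
  have o0: "ord_ge2 f (1,0,0)" using f by (auto simp: IS_def Ipt_def)
  note ord_eq(1)[OF o0, of "(1,0,0)", simplified monos4_eq, simplified]
  note q0_0 = this[unfolded dmon_def, simplified]
  note ord_eq(1)[OF o0, of "(0,1,0)", simplified monos4_eq, simplified]
  note q0_1 = this[unfolded dmon_def, simplified]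
  note ord_eq(1)[OF o0, of "(0,0,1)", simplified monos4_eq, simplified]
  note q0_2 = this[unfolded dmon_def, simplified]
  note ord_eq(2)[OF o0, unfolded evalf_alt monos4_eq, simplified]
  note q0_v = this[unfolded mon_def, simplified]
  have d0: "delta (2,2,0) \<in> fspan (FS {(1,0,0)})" by (rule delta_span2[of "(1,1,0)" "(1,1,0)"]) (auto simp: monos2_def mon_def tadd_def)
  have d1: "delta (2,1,1) \<in> fspan (FS {(1,0,0)})" by (rule delta_span2[of "(1,1,0)" "(1,0,1)"]) (auto simp: monos2_def mon_def tadd_def)
  have d2: "delta (1,3,0) \<in> fspan (FS {(1,0,0)})" by (rule delta_span2[of "(1,1,0)" "(0,2,0)"]) (auto simp: monos2_def mon_def tadd_def)
  have d3: "delta (1,2,1) \<in> fspan (FS {(1,0,0)})" by (rule delta_span2[of "(1,1,0)" "(0,1,1)"]) (auto simp: monos2_def mon_def tadd_def)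
  have d4: "delta (1,1,2) \<in> fspan (FS {(1,0,0)})" by (rule delta_span2[of "(1,1,0)" "(0,0,2)"]) (auto simp: monos2_def mon_def tadd_def)
  have d5: "delta (2,0,2) \<in> fspan (FS {(1,0,0)})" by (rule delta_span2[of "(1,0,1)" "(1,0,1)"]) (auto simp: monos2_def mon_def tadd_def)
  have d6: "delta (1,0,3) \<in> fspan (FS {(1,0,0)})" by (rule delta_span2[of "(1,0,1)" "(0,0,2)"]) (auto simp: monos2_def mon_def tadd_def)
  have d7: "delta (0,4,0) \<in> fspan (FS {(1,0,0)})" by (rule delta_span2[of "(0,2,0)" "(0,2,0)"]) (auto simp: monos2_def mon_def tadd_def)
  have d8: "delta (0,3,1) \<in> fspan (FS {(1,0,0)})" by (rule delta_span2[of "(0,2,0)" "(0,1,1)"]) (auto simp: monos2_def mon_def tadd_def)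
  have d9: "delta (0,2,2) \<in> fspan (FS {(1,0,0)})" by (rule delta_span2[of "(0,2,0)" "(0,0,2)"]) (auto simp: monos2_def mon_def tadd_def)
  have d10: "delta (0,1,3) \<in> fspan (FS {(1,0,0)})" by (rule delta_span2[of "(0,1,1)" "(0,0,2)"]) (auto simp: monos2_def mon_def tadd_def)
  have d11: "delta (0,0,4) \<in> fspan (FS {(1,0,0)})" by (rule delta_span2[of "(0,0,2)" "(0,0,2)"]) (auto simp: monos2_def mon_def tadd_def)
  show "f \<in> fspan (FS {(1,0,0)})"
    by (rule span_of_coeffs15[OF H]; (blast intro: d0 d1 d2 d3 d4 d5 d6 d7 d8 d9 d10 d11 | simp add: q0_0 q0_1 q0_2 q0_v))
qed

lemma S2: "IS {(1,0,0),(0,1,0)} \<subseteq> fspan (FS {(1,0,0),(0,1,0)})"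
proof
  fix f assume f: "f \<in> IS {(1,0,0),(0,1,0)}"
  have H: "f \<in> H4" using f by (simp add: IS_def)
  have o0: "ord_ge2 f (1,0,0)" using f by (auto simp: IS_def Ipt_def)
  note ord_eq(1)[OF o0, of "(1,0,0)", simplified monos4_eq, simplified]
  note q0_0 = this[unfolded dmon_def, simplified]
  note ord_eq(1)[OF o0, of "(0,1,0)", simplified monos4_eq, simplified]
  note q0_1 = this[unfolded dmon_def, simplified]
  note ord_eq(1)[OF o0, of "(0,0,1)", simplified monos4_eq, simplified]
  note q0_2 = this[unfolded dmon_def, simplified]
  note ord_eq(2)[OF o0, unfolded evalf_alt monos4_eq, simplified]
  note q0_v = this[unfolded mon_def, simplified]
  have o1: "ord_ge2 f (0,1,0)" using f by (auto simp: IS_def Ipt_def)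
  note ord_eq(1)[OF o1, of "(1,0,0)", simplified monos4_eq, simplified]
  note q1_0 = this[unfolded dmon_def, simplified]
  note ord_eq(1)[OF o1, of "(0,1,0)", simplified monos4_eq, simplified]
  note q1_1 = this[unfolded dmon_def, simplified]
  note ord_eq(1)[OF o1, of "(0,0,1)", simplified monos4_eq, simplified]
  note q1_2 = this[unfolded dmon_def, simplified]
  note ord_eq(2)[OF o1, unfolded evalf_alt monos4_eq, simplified]
  note q1_v = this[unfolded mon_def, simplified]
  have d0: "delta (2,2,0) \<in> fspan (FS {(1,0,0),(0,1,0)})" by (rule delta_span2[of "(1,1,0)" "(1,1,0)"]) (auto simp: monos2_def mon_def tadd_def)
  have d1: "delta (2,1,1) \<in> fspan (FS {(1,0,0),(0,1,0)})" by (rule delta_span2[of "(1,1,0)" "(1,0,1)"]) (auto simp: monos2_def mon_def tadd_def)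
  have d2: "delta (1,2,1) \<in> fspan (FS {(1,0,0),(0,1,0)})" by (rule delta_span2[of "(1,1,0)" "(0,1,1)"]) (auto simp: monos2_def mon_def tadd_def)
  have d3: "delta (1,1,2) \<in> fspan (FS {(1,0,0),(0,1,0)})" by (rule delta_span2[of "(1,1,0)" "(0,0,2)"]) (auto simp: monos2_def mon_def tadd_def)
  have d4: "delta (2,0,2) \<in> fspan (FS {(1,0,0),(0,1,0)})" by (rule delta_span2[of "(1,0,1)" "(1,0,1)"]) (auto simp: monos2_def mon_def tadd_def)
  have d5: "delta (1,0,3) \<in> fspan (FS {(1,0,0),(0,1,0)})" by (rule delta_span2[of "(1,0,1)" "(0,0,2)"]) (auto simp: monos2_def mon_def tadd_def)
  have d6: "delta (0,2,2) \<in> fspan (FS {(1,0,0),(0,1,0)})" by (rule delta_span2[of "(0,1,1)" "(0,1,1)"]) (auto simp: monos2_def mon_def tadd_def)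
  have d7: "delta (0,1,3) \<in> fspan (FS {(1,0,0),(0,1,0)})" by (rule delta_span2[of "(0,1,1)" "(0,0,2)"]) (auto simp: monos2_def mon_def tadd_def)
  have d8: "delta (0,0,4) \<in> fspan (FS {(1,0,0),(0,1,0)})" by (rule delta_span2[of "(0,0,2)" "(0,0,2)"]) (auto simp: monos2_def mon_def tadd_def)
  show "f \<in> fspan (FS {(1,0,0),(0,1,0)})"
    by (rule span_of_coeffs15[OF H]; (blast intro: d0 d1 d2 d3 d4 d5 d6 d7 d8 | simp add: q0_0 q0_1 q0_2 q0_v q1_0 q1_1 q1_2 q1_v))
qed
lemma S3: "IS {(1,0,0),(0,1,0),(0,0,1)} \<subseteq> fspan (FS {(1,0,0),(0,1,0),(0,0,1)})"
proof
  fix f assume f: "f \<in> IS {(1,0,0),(0,1,0),(0,0,1)}"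
  have H: "f \<in> H4" using f by (simp add: IS_def)
  have o0: "ord_ge2 f (1,0,0)" using f by (auto simp: IS_def Ipt_def)
  note ord_eq(1)[OF o0, of "(1,0,0)", simplified monos4_eq, simplified]
  note q0_0 = this[unfolded dmon_def, simplified]
  note ord_eq(1)[OF o0, of "(0,1,0)", simplified monos4_eq, simplified]
  note q0_1 = this[unfolded dmon_def, simplified]
  note ord_eq(1)[OF o0, of "(0,0,1)", simplified monos4_eq, simplified]
  note q0_2 = this[unfolded dmon_def, simplified]
  note ord_eq(2)[OF o0, unfolded evalf_alt monos4_eq, simplified]
  note q0_v = this[unfolded mon_def, simplified]
  have o1: "ord_ge2 f (0,1,0)" using f by (auto simp: IS_def Ipt_def)
  note ord_eq(1)[OF o1, of "(1,0,0)", simplified monos4_eq, simplified]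
  note q1_0 = this[unfolded dmon_def, simplified]
  note ord_eq(1)[OF o1, of "(0,1,0)", simplified monos4_eq, simplified]
  note q1_1 = this[unfolded dmon_def, simplified]
  note ord_eq(1)[OF o1, of "(0,0,1)", simplified monos4_eq, simplified]
  note q1_2 = this[unfolded dmon_def, simplified]
  note ord_eq(2)[OF o1, unfolded evalf_alt monos4_eq, simplified]
  note q1_v = this[unfolded mon_def, simplified]
  have o2: "ord_ge2 f (0,0,1)" using f by (auto simp: IS_def Ipt_def)
  note ord_eq(1)[OF o2, of "(1,0,0)", simplified monos4_eq, simplified]
  note q2_0 = this[unfolded dmon_def, simplified]
  note ord_eq(1)[OF o2, of "(0,1,0)", simplified monos4_eq, simplified]
  note q2_1 = this[unfolded dmon_def, simplified]
  note ord_eq(1)[OF o2, of "(0,0,1)", simplified monos4_eq, simplified]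
  note q2_2 = this[unfolded dmon_def, simplified]
  note ord_eq(2)[OF o2, unfolded evalf_alt monos4_eq, simplified]
  note q2_v = this[unfolded mon_def, simplified]
  have d0: "delta (2,2,0) \<in> fspan (FS {(1,0,0),(0,1,0),(0,0,1)})" by (rule delta_span2[of "(1,1,0)" "(1,1,0)"]) (auto simp: monos2_def mon_def tadd_def)
  have d1: "delta (2,1,1) \<in> fspan (FS {(1,0,0),(0,1,0),(0,0,1)})" by (rule delta_span2[of "(1,1,0)" "(1,0,1)"]) (auto simp: monos2_def mon_def tadd_def)
  have d2: "delta (1,2,1) \<in> fspan (FS {(1,0,0),(0,1,0),(0,0,1)})" by (rule delta_span2[of "(1,1,0)" "(0,1,1)"]) (auto simp: monos2_def mon_def tadd_def)
  have d3: "delta (2,0,2) \<in> fspan (FS {(1,0,0),(0,1,0),(0,0,1)})" by (rule delta_span2[of "(1,0,1)" "(1,0,1)"]) (auto simp: monos2_def mon_def tadd_def)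
  have d4: "delta (1,1,2) \<in> fspan (FS {(1,0,0),(0,1,0),(0,0,1)})" by (rule delta_span2[of "(1,0,1)" "(0,1,1)"]) (auto simp: monos2_def mon_def tadd_def)
  have d5: "delta (0,2,2) \<in> fspan (FS {(1,0,0),(0,1,0),(0,0,1)})" by (rule delta_span2[of "(0,1,1)" "(0,1,1)"]) (auto simp: monos2_def mon_def tadd_def)
  show "f \<in> fspan (FS {(1,0,0),(0,1,0),(0,0,1)})"
    by (rule span_of_coeffs15[OF H]; (blast intro: d0 d1 d2 d3 d4 d5 | simp add: q0_0 q0_1 q0_2 q0_v q1_0 q1_1 q1_2 q1_v q2_0 q2_1 q2_2 q2_v))
qed
lemma S4: "IS {(1,0,0),(0,1,0),(0,0,1),(1,1,1)} \<subseteq> fspan (FS {(1,0,0),(0,1,0),(0,0,1),(1,1,1)})"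
proof
  interpret M: module fscale by (rule module_fscale)
  fix f assume f: "f \<in> IS {(1,0,0),(0,1,0),(0,0,1),(1,1,1)}"
  have H: "f \<in> H4" using f by (simp add: IS_def)
  have o0: "ord_ge2 f (1,0,0)" using f by (auto simp: IS_def Ipt_def)
  note ord_eq(1)[OF o0, of "(1,0,0)", simplified monos4_eq, simplified]
  note q0_0 = this[unfolded dmon_def, simplified]
  note ord_eq(1)[OF o0, of "(0,1,0)", simplified monos4_eq, simplified]
  note q0_1 = this[unfolded dmon_def, simplified]
  note ord_eq(1)[OF o0, of "(0,0,1)", simplified monos4_eq, simplified]
  note q0_2 = this[unfolded dmon_def, simplified]
  note ord_eq(2)[OF o0, unfolded evalf_alt monos4_eq, simplified]
  note q0_v = this[unfolded mon_def, simplified]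
  have o1: "ord_ge2 f (0,1,0)" using f by (auto simp: IS_def Ipt_def)
  note ord_eq(1)[OF o1, of "(1,0,0)", simplified monos4_eq, simplified]
  note q1_0 = this[unfolded dmon_def, simplified]
  note ord_eq(1)[OF o1, of "(0,1,0)", simplified monos4_eq, simplified]
  note q1_1 = this[unfolded dmon_def, simplified]
  note ord_eq(1)[OF o1, of "(0,0,1)", simplified monos4_eq, simplified]
  note q1_2 = this[unfolded dmon_def, simplified]
  note ord_eq(2)[OF o1, unfolded evalf_alt monos4_eq, simplified]
  note q1_v = this[unfolded mon_def, simplified]
  have o2: "ord_ge2 f (0,0,1)" using f by (auto simp: IS_def Ipt_def)
  note ord_eq(1)[OF o2, of "(1,0,0)", simplified monos4_eq, simplified]
  note q2_0 = this[unfolded dmon_def, simplified]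
  note ord_eq(1)[OF o2, of "(0,1,0)", simplified monos4_eq, simplified]
  note q2_1 = this[unfolded dmon_def, simplified]
  note ord_eq(1)[OF o2, of "(0,0,1)", simplified monos4_eq, simplified]
  note q2_2 = this[unfolded dmon_def, simplified]
  note ord_eq(2)[OF o2, unfolded evalf_alt monos4_eq, simplified]
  note q2_v = this[unfolded mon_def, simplified]
  have o3: "ord_ge2 f (1,1,1)" using f by (auto simp: IS_def Ipt_def)
  note ord_eq(1)[OF o3, of "(1,0,0)", simplified monos4_eq, simplified]
  note q3_0 = this[unfolded dmon_def, simplified]
  note ord_eq(1)[OF o3, of "(0,1,0)", simplified monos4_eq, simplified]
  note q3_1 = this[unfolded dmon_def, simplified]
  note ord_eq(1)[OF o3, of "(0,0,1)", simplified monos4_eq, simplified]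
  note q3_2 = this[unfolded dmon_def, simplified]
  note ord_eq(2)[OF o3, unfolded evalf_alt monos4_eq, simplified]
  note q3_v = this[unfolded mon_def, simplified]
  define G1 where "G1 = delta (2,2,0) - fscale 2 (delta (1,2,1)) + delta (0,2,2)"
  define G2 where "G2 = delta (2,0,2) - fscale 2 (delta (1,1,2)) + delta (0,2,2)"
  define G3 where "G3 = delta (2,2,0) + delta (2,0,2) + fscale 4 (delta (0,2,2)) + fscale 2 (delta (2,1,1)) - fscale 4 (delta (1,2,1)) - fscale 4 (delta (1,1,2))"
  have ev1: "evalf G1 v = (fst v * fst (snd v) - fst (snd v) * snd (snd v))^2" for v
    unfolding G1_def by (simp add: evalf_add evalf_diff evalf_scale evalf_delta monos4_eq mon_def power2_eq_square algebra_simps)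
  have ev2: "evalf G2 v = (fst v * snd (snd v) - fst (snd v) * snd (snd v))^2" for v
    unfolding G2_def by (simp add: evalf_add evalf_diff evalf_scale evalf_delta monos4_eq mon_def power2_eq_square algebra_simps)
  have ev3: "evalf G3 v = (fst v * fst (snd v) + fst v * snd (snd v) - 2 * fst (snd v) * snd (snd v))^2" for v
    unfolding G3_def by (simp add: evalf_add evalf_diff evalf_scale evalf_delta monos4_eq mon_def power2_eq_square algebra_simps)
  have "G1 \<in> H4" unfolding G1_def by (simp add: H4_add H4_diff H4_scale H4_delta monos4_eq)
  then have g1: "G1 \<in> FS {(1,0,0),(0,1,0),(0,0,1),(1,1,1)}"
    by (rule FS_intro) (auto simp: ev1)
  have "G2 \<in> H4" unfolding G2_def by (simp add: H4_add H4_diff H4_scale H4_delta monos4_eq)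
  then have g2: "G2 \<in> FS {(1,0,0),(0,1,0),(0,0,1),(1,1,1)}"
    by (rule FS_intro) (auto simp: ev2)
  have "G3 \<in> H4" unfolding G3_def by (simp add: H4_add H4_diff H4_scale H4_delta monos4_eq)
  then have g3: "G3 \<in> FS {(1,0,0),(0,1,0),(0,0,1),(1,1,1)}"
    by (rule FS_intro) (auto simp: ev3)
  have eq: "f = fscale (f (2,2,0)) G1 + fscale (f (2,0,2)) G2 + fscale (f (2,1,1) / 2) (G3 - G1 - G2)"
  proof
    fix k
    show "f k = (fscale (f (2,2,0)) G1 + fscale (f (2,0,2)) G2 + fscale (f (2,1,1) / 2) (G3 - G1 - G2)) k"
    proof (cases "k \<in> monos4")
      case True
      then show ?thesis unfolding monos4_eq
        by (elim insertE emptyE; hypsubst; simp add: G1_def G2_def G3_def delta_def fscale_def; use q0_0 q0_1 q0_2 q0_v q1_0 q1_1 q1_2 q1_v q2_0 q2_1 q2_2 q2_v q3_0 q3_1 q3_2 q3_v in linarith)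
    next
      case False
      then have "f k = 0" using H unfolding H4_def by blast
      with False show ?thesis by (simp add: monos4_eq G1_def G2_def G3_def delta_def fscale_def)
    qed
  qed
  show "f \<in> fspan (FS {(1,0,0),(0,1,0),(0,0,1),(1,1,1)})"
    by (subst eq) (intro M.span_add M.span_scale M.span_diff M.span_base g1 g2 g3)
qed


theorem mainTheorem9:
  fixes e1 e2 e3 e4 :: "real \<times> real \<times> real"
  assumes "e1 = (1,0,0)" and "e2 = (0,1,0)" and "e3 = (0,0,1)" and "e4 = (1,1,1)"
  shows "\<forall>S \<in> {{e1}, {e1,e2}, {e1,e2,e3}, {e1,e2,e3,e4}}. fspan (FS S) = IS S"
  unfolding assms using span_sub S1 S2 S3 S4 by (simp add: set_eq_subset)

end
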